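(* Let $\beta>0$, $x=\tanh\beta$, and let $\sigma$ be distributed according to the Ising measure $\mathbb{I}_{0,\beta}$ on $\{1,\dots,n\}$. For every $r\ge1$ and indices $1\le i_1\le i_2\le\dots\le i_{2r}\le n$, $$\kappa(\sigma(i_1),\dots,\sigma(i_{2r}))=(-1)^{r-1}\sum_{\delta\in\mathfrak{D}^*_{2r}}\Big(\prod_{k=1}^{2r-1}\delta_k\Big)\,x^{\sum_{\{a<b\}\in\nu(\delta)}(i_b-i_a)}.$$
   Context: The Ising measure $\mathbb{I}_{0,\beta}$ gives to $\sigma:\{1,\dots,n\}\to\{\pm1\}$ probability proportional to $\exp(\beta\sum_{i=1}^{n-1}\sigma(i)\sigma(i+1))$. The joint cumulant is $\kappa(X_1,\dots,X_s)=\sum_{\Pi}(-1)^{\ell(\Pi)-1}(\ell(\Pi)-1)!\prod_{A\in\Pi}\mathbb{E}[\prod_{j\in A}X_j]$, the sum over set partitions $\Pi$ of $\{1,\dots,s\}$ with $\ell(\Pi)$ blocks. A Dyck path of length $2r$ is a sequence $\delta=(\delta_0,\dots,\delta_{2r})$ of nonnegative integers with $\delta_0=\delta_{2r}=0$ and $|\delta_{k+1}-\delta_k|=1$. $\mathfrak{D}^*_{2r}$ is the set of Dyck paths of length $2r$ with $\delta_k\ge1$ for all $1\le k\le2r-1$. For a Dyck path $\delta$, step $k$ (from $\delta_{k-1}$ to $\delta_k$) is up or down; $\nu(\delta)$ is the non-crossing pairing of $\{1,\dots,2r\}$ obtained by pairing each up step $a$ with the down step $b>a$ that first returns the path to level $\delta_{a-1}$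 (the usual matching). *)

theory Defs
  imports Complex_Main "HOL-Library.Disjoint_Sets"
begin

(* Spin configurations on {1..n}: functions in PiE (undefined outside {1..n}). *)
definition spins :: "nat \<Rightarrow> (nat \<Rightarrow> int) set" where
  "spins n = PiE {1..n} (\<lambda>_. {-1, 1})"

definition ising_weight :: "nat \<Rightarrow> real \<Rightarrow> (nat \<Rightarrow> int) \<Rightarrow> real" where
  "ising_weight n \<beta> \<sigma> = exp (\<beta> * (\<Sum>i = 1..<n. real_of_int (\<sigma> i * \<sigma> (Suc i))))"

definition ising_E :: "nat \<Rightarrow> real \<Rightarrow> ((nat \<Rightarrow> int) \<Rightarrow> real) \<Rightarrow> real" where
  "ising_E n \<beta> f =
     (\<Sum>\<sigma>\<in>spins n. f \<sigma> * ising_weight n \<beta> \<sigma>) / (\<Sum>\<sigma>\<in>spins n. ising_weight n \<beta> \<sigma>)"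

definition cumulant :: "(('a \<Rightarrow> real) \<Rightarrow> real) \<Rightarrow> nat \<Rightarrow> (nat \<Rightarrow> 'a \<Rightarrow> real) \<Rightarrow> real" where
  "cumulant E s X =
     (\<Sum>Q\<in>{P. partition_on {1..s} P}.
        (-1) ^ (card Q - 1) * fact (card Q - 1) *
        (\<Prod>A\<in>Q. E (\<lambda>\<omega>. \<Prod>j\<in>A. X j \<omega>)))"

definition dyck_star :: "nat \<Rightarrow> (nat \<Rightarrow> int) set" where
  "dyck_star r = {\<delta>. (\<forall>k>2*r. \<delta> k = 0) \<and> \<delta> 0 = 0 \<and> \<delta> (2*r) = 0 \<and>
       (\<forall>k<2*r. \<bar>\<delta> (Suc k) - \<delta> k\<bar> = 1) \<and>
       (\<forall>k\<in>{1..2*r-1}. \<delta> k \<ge> 1)}"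

(* the non-crossing pairing nu(delta): each up step a (delta_{a-1} -> delta_a) is paired with the
   first later step b that returns the path to level delta_{a-1} *)
definition dyck_pairing :: "nat \<Rightarrow> (nat \<Rightarrow> int) \<Rightarrow> (nat \<times> nat) set" where
  "dyck_pairing r \<delta> = {(a, LEAST b. a < b \<and> \<delta> b = \<delta> (a - 1)) | a.
       a \<in> {1..2*r} \<and> \<delta> a = \<delta> (a - 1) + 1}"

end

theory Submission
  imports Defs
begin

definition phi :: "nat \<Rightarrow> (nat \<Rightarrow> int) \<Rightarrow> (nat \<Rightarrow> int)" where
  "phi n \<sigma> = restrict (\<lambda>t. if t < n then \<sigma> t * \<sigma> (Suc t) else \<sigma> t) {1..n}"
definition psi :: "nat \<Rightarrow> (nat \<Rightarrow> int) \<Rightarrow> (nat \<Rightarrow> int)" where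
  "psi n \<tau> = restrict (\<lambda>t. \<Prod>u\<in>{t..n}. \<tau> u) {1..n}"

lemma pm1_sq: "(a::int) \<in> {-1,1} \<Longrightarrow> a * a = 1" by auto

lemma spins_val: "\<sigma> \<in> spins n \<Longrightarrow> t \<in> {1..n} \<Longrightarrow> \<sigma> t \<in> {-1,1}"
  unfolding spins_def by (auto simp: PiE_iff)

lemma mult_pm1: "(a::int) \<in> {-1,1} \<Longrightarrow> b \<in> {-1,1} \<Longrightarrow> a * b \<in> {-1,1}" by auto

lemma prod_pm1: "finite S \<Longrightarrow> (\<And>u. u \<in> S \<Longrightarrow> f u \<in> {-1,1::int}) \<Longrightarrow> prod f S \<in> {-1,1}"
proof (induction S rule: finite_induct)
  case (insert x F)
  have "f x \<in> {-1,1}" "prod f F \<in> {-1,1}" using insert by auto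
  from mult_pm1[OF this] show ?case using insert(1,2) by simp
qed simp

lemma phi_spins: assumes s: "\<sigma> \<in> spins n" shows "phi n \<sigma> \<in> spins n"
proof -
  have "phi n \<sigma> t \<in> {-1,1}" if "t \<in> {1..n}" for t
  proof (cases "t < n")
    case True
    then show ?thesis using that spins_val[OF s, of t] spins_val[OF s, of "Suc t"]
      by (auto simp: phi_def)
  next
    case False then show ?thesis using that spins_val[OF s, of t] by (simp add: phi_def)
  qed
  then show ?thesis unfolding spins_def by (auto simp: PiE_iff phi_def)
qed

lemma psi_spins: "\<tau> \<in> spins n \<Longrightarrow> psi n \<tau> \<in> spins n"
proof -
  assume t: "\<tau> \<in> spins n"
  have "(\<Prod>u\<in>{t..n}. \<tau> u) \<in> {-1,1}" if "t \<in> {1..n}" for t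
    by (rule prod_pm1) (use that spins_val[OF t] in auto)
  then show ?thesis unfolding psi_def spins_def by (auto simp: PiE_iff)
qed

lemma prod_phi: assumes s: "\<sigma> \<in> spins n" and t: "1 \<le> t" "t \<le> n"
  shows "(\<Prod>u\<in>{t..n}. phi n \<sigma> u) = \<sigma> t"
  using t(2)
proof (induction t rule: inc_induct)
  case base
  then show ?case using t by (simp add: phi_def)
next
  case (step m)
  have m1: "1 \<le> m" using t step by auto
  have "{m..n} = insert m {Suc m..n}" using step by auto
  then have "(\<Prod>u\<in>{m..n}. phi n \<sigma> u) = phi n \<sigma> m * \<sigma> (Suc m)"
    using step by simp
  also have "\<dots> = \<sigma> m * (\<sigma> (Suc m) * \<sigma> (Suc m))"
    using step m1 by (simp add: phi_def)
  also have "\<dots> = \<sigma> m" using spins_val[OF s, of "Suc m"] step by auto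
  finally show ?case .
qed

lemma psi_phi: "\<sigma> \<in> spins n \<Longrightarrow> psi n (phi n \<sigma>) = \<sigma>"
  apply (rule ext)
  subgoal for t
    using prod_phi[of \<sigma> n t]
    by (cases "t \<in> {1..n}") (auto simp: psi_def spins_def PiE_iff extensional_def)
  done

lemma phi_psi: assumes tau: "\<tau> \<in> spins n" shows "phi n (psi n \<tau>) = \<tau>"
proof (rule ext)
  fix t
  show "phi n (psi n \<tau>) t = \<tau> t"
  proof (cases "t \<in> {1..n}")
    case False then show ?thesis using tau by (auto simp: phi_def spins_def PiE_iff extensional_def)
  next
    case True
    show ?thesis
    proof (cases "t < n")
      case True
      have "{t..n} = insert t {Suc t..n}" using True by auto
      then have "(\<Prod>u\<in>{t..n}. \<tau> u) = \<tau> t * (\<Prod>u\<in>{Suc t..n}. \<tau> u)" by simp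
      moreover have "(\<Prod>u\<in>{Suc t..n}. \<tau> u) \<in> {-1,1}"
        by (rule prod_pm1) (use spins_val[OF tau] True `t \<in> {1..n}` in auto)
      ultimately show ?thesis using True `t \<in> {1..n}`
        by (auto simp: phi_def psi_def)
    next
      case False
      then have "t = n" using True by auto
      then show ?thesis using True by (simp add: phi_def psi_def)
    qed
  qed
qed

lemma bij_psi: "bij_betw (psi n) (spins n) (spins n)"
  by (rule bij_betw_byWitness[where f'="phi n"]) (auto simp: psi_phi phi_psi phi_spins psi_spins)

lemma psi_eval: "t \<in> {1..n} \<Longrightarrow> psi n \<tau> t = (\<Prod>u\<in>{1..n}. if t \<le> u then \<tau> u else 1)"
proof -
  assume t: "t \<in> {1..n}"
  have "(\<Prod>u\<in>{1..n}. if t \<le> u then \<tau> u else 1) = (\<Prod>u\<in>{1..n} \<inter> {u. t \<le> u}. \<tau> u)"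
    by (simp add: prod.If_cases)
  also have "{1..n} \<inter> {u. t \<le> u} = {t..n}" using t by auto
  finally show ?thesis using t by (simp add: psi_def)
qed

lemma obs_psi:
  assumes A: "finite A" "\<And>j. j \<in> A \<Longrightarrow> i j \<in> {1..n}"
  shows "(\<Prod>j\<in>A. real_of_int (psi n \<tau> (i j))) =
         (\<Prod>u\<in>{1..n}. real_of_int (\<tau> u) ^ card {j\<in>A. i j \<le> u})"
proof -
  have "(\<Prod>j\<in>A. real_of_int (psi n \<tau> (i j))) =
        (\<Prod>j\<in>A. \<Prod>u\<in>{1..n}. if i j \<le> u then real_of_int (\<tau> u) else 1)"
    by (rule prod.cong) (auto simp: psi_eval[OF A(2)] of_int_prod intro!: prod.cong)
  also have "\<dots> = (\<Prod>u\<in>{1..n}. \<Prod>j\<in>A. if i j \<le> u then real_of_int (\<tau> u) else 1)"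
    by (rule prod.swap)
  also have "\<dots> = (\<Prod>u\<in>{1..n}. real_of_int (\<tau> u) ^ card {j\<in>A. i j \<le> u})"
  proof (rule prod.cong)
    fix u
    have "(\<Prod>j\<in>A. if i j \<le> u then real_of_int (\<tau> u) else 1) = (\<Prod>j\<in>A \<inter> {j. i j \<le> u}. real_of_int (\<tau> u))"
      using A by (simp add: prod.If_cases)
    also have "A \<inter> {j. i j \<le> u} = {j\<in>A. i j \<le> u}" by auto
    finally show "(\<Prod>j\<in>A. if i j \<le> u then real_of_int (\<tau> u) else 1) = real_of_int (\<tau> u) ^ card {j\<in>A. i j \<le> u}"
      by simp
  qed simp
  finally show ?thesis .
qed

lemma weight_psi:
  assumes tau: "\<tau> \<in> spins n"
  shows "ising_weight n \<beta> (psi n \<tau>) = (\<Prod>u\<in>{1..n}. if u < n then exp (\<beta> * real_of_int (\<tau> u)) else 1)"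
proof -
  have "(\<Sum>t = 1..<n. real_of_int (psi n \<tau> t * psi n \<tau> (Suc t))) = (\<Sum>t = 1..<n. real_of_int (\<tau> t))"
  proof (rule sum.cong)
    fix t assume t: "t \<in> {1..<n}"
    have "phi n (psi n \<tau>) t = \<tau> t" using phi_psi[OF tau] by simp
    then show "real_of_int (psi n \<tau> t * psi n \<tau> (Suc t)) = real_of_int (\<tau> t)"
      using t by (simp add: phi_def)
  qed simp
  then have "ising_weight n \<beta> (psi n \<tau>) = exp (\<Sum>t = 1..<n. \<beta> * real_of_int (\<tau> t))"
    by (simp add: ising_weight_def sum_distrib_left)
  also have "\<dots> = (\<Prod>t = 1..<n. exp (\<beta> * real_of_int (\<tau> t)))" by (simp add: exp_sum)
  also have "\<dots> = (\<Prod>u\<in>{1..n} \<inter> {u. u < n}. exp (\<beta> * real_of_int (\<tau> u)))"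
    by (rule prod.cong) auto
  also have "\<dots> = (\<Prod>u\<in>{1..n}. if u < n then exp (\<beta> * real_of_int (\<tau> u)) else 1)"
    by (simp add: prod.If_cases)
  finally show ?thesis .
qed

definition cfac :: "real \<Rightarrow> nat \<Rightarrow> nat \<Rightarrow> nat \<Rightarrow> real" where
  "cfac \<beta> n N u = (if u < n then (if even N then 2 * cosh \<beta> else 2 * sinh \<beta>) else (if even N then 2 else 0))"

lemma numerator:
  assumes A: "finite A" "\<And>j. j \<in> A \<Longrightarrow> i j \<in> {1..n}"
  shows "(\<Sum>\<sigma>\<in>spins n. (\<Prod>j\<in>A. real_of_int (\<sigma> (i j))) * ising_weight n \<beta> \<sigma>) =
         (\<Prod>u\<in>{1..n}. cfac \<beta> n (card {j\<in>A. i j \<le> u}) u)"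
proof -
  let ?g = "\<lambda>u s. real_of_int s ^ card {j\<in>A. i j \<le> u} * (if u < n then exp (\<beta> * real_of_int s) else 1)"
  have "(\<Sum>\<sigma>\<in>spins n. (\<Prod>j\<in>A. real_of_int (\<sigma> (i j))) * ising_weight n \<beta> \<sigma>) =
        (\<Sum>\<tau>\<in>spins n. (\<Prod>j\<in>A. real_of_int (psi n \<tau> (i j))) * ising_weight n \<beta> (psi n \<tau>))"
    using sum.reindex_bij_betw[OF bij_psi[of n], symmetric] by simp
  also have "\<dots> = (\<Sum>\<tau>\<in>spins n. \<Prod>u\<in>{1..n}. ?g u (\<tau> u))"
    by (rule sum.cong) (auto simp: obs_psi[OF A] weight_psi prod.distrib[symmetric] intro!: prod.cong)
  also have "\<dots> = (\<Prod>u\<in>{1..n}. \<Sum>s\<in>{-1,1}. ?g u s)"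
    unfolding spins_def by (rule prod_sum_PiE[symmetric]) auto
  also have "\<dots> = (\<Prod>u\<in>{1..n}. cfac \<beta> n (card {j\<in>A. i j \<le> u}) u)"
    by (rule prod.cong) (auto simp: cfac_def cosh_def sinh_def exp_minus)
  finally show ?thesis .
qed

lemma ising_moment:
  assumes n: "1 \<le> n" and A: "finite A" "\<And>j. j \<in> A \<Longrightarrow> i j \<in> {1..n}"
  shows "ising_E n \<beta> (\<lambda>\<sigma>. \<Prod>j\<in>A. real_of_int (\<sigma> (i j))) =
    (if even (card A) then tanh \<beta> ^ card {u\<in>{1..<n}. odd (card {j\<in>A. i j \<le> u})} else 0)"
proof -
  define N where "N u = card {j\<in>A. i j \<le> u}" for u
  have den: "(\<Sum>\<sigma>\<in>spins n. ising_weight n \<beta> \<sigma>) = (\<Prod>u\<in>{1..n}. cfac \<beta> n 0 u)"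
    using numerator[of "{}" i n \<beta>] by simp
  have cpos: "cosh \<beta> > 0" by (simp add: cosh_def add_pos_pos)
  have "ising_E n \<beta> (\<lambda>\<sigma>. \<Prod>j\<in>A. real_of_int (\<sigma> (i j))) =
      (\<Prod>u\<in>{1..n}. cfac \<beta> n (N u) u) / (\<Prod>u\<in>{1..n}. cfac \<beta> n 0 u)"
    unfolding ising_E_def den N_def using numerator[OF A, where \<beta>=\<beta>] by simp
  also have "\<dots> = (\<Prod>u\<in>{1..n}. cfac \<beta> n (N u) u / cfac \<beta> n 0 u)"
    by (rule prod_dividef[symmetric])
  also have "{1..n} = insert n {1..<n}" using n by auto
  also have "(\<Prod>u\<in>insert n {1..<n}. cfac \<beta> n (N u) u / cfac \<beta> n 0 u) =
     cfac \<beta> n (N n) n / cfac \<beta> n 0 n * (\<Prod>u\<in>{1..<n}. cfac \<beta> n (N u) u / cfac \<beta> n 0 u)"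
    by simp
  also have "N n = card A"
  proof -
    have "{j\<in>A. i j \<le> n} = A" using A(2) by auto
    then show ?thesis by (simp add: N_def)
  qed
  also have "(\<Prod>u\<in>{1..<n}. cfac \<beta> n (N u) u / cfac \<beta> n 0 u) = (\<Prod>u\<in>{1..<n}. if odd (N u) then tanh \<beta> else 1)"
    by (rule prod.cong) (use cpos in \<open>auto simp: cfac_def tanh_def\<close>)
  also have "\<dots> = tanh \<beta> ^ card {u\<in>{1..<n}. odd (N u)}"
  proof -
    have "(\<Prod>u\<in>{1..<n}. if odd (N u) then tanh \<beta> else 1) = (\<Prod>u\<in>{1..<n} \<inter> {u. odd (N u)}. tanh \<beta>)"
      by (simp add: prod.If_cases)
    also have "{1..<n} \<inter> {u. odd (N u)} = {u\<in>{1..<n}. odd (N u)}" by auto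
    finally show ?thesis by simp
  qed
  finally show ?thesis by (cases "even (card A)") (auto simp: cfac_def N_def)
qed

lemma part_def': "partition_on S P \<longleftrightarrow> \<Union>P = S \<and> (\<forall>A\<in>P. \<forall>B\<in>P. A \<noteq> B \<longrightarrow> A \<inter> B = {}) \<and> {} \<notin> P"
  unfolding partition_on_def disjoint_def by auto

lemma g1_part: "partition_on S P \<Longrightarrow> a \<notin> S \<Longrightarrow> partition_on (insert a S) (insert {a} P)"
  unfolding part_def' by auto

lemma g2_part: assumes P: "partition_on S P" and a: "a \<notin> S" and A: "A \<in> P"
  shows "partition_on (insert a S) (insert (insert a A) (P - {A}))"
proof -
  have U: "\<Union>P = S" and D: "\<And>B C. B \<in> P \<Longrightarrow> C \<in> P \<Longrightarrow> B \<noteq> C \<Longrightarrow> B \<inter> C = {}"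
    and E: "{} \<notin> P" using P unfolding part_def' by auto
  have aB: "\<And>B. B \<in> P \<Longrightarrow> a \<notin> B" using U a by auto
  have "\<Union>(insert (insert a A) (P - {A})) = insert a (\<Union>P)" using A by auto
  moreover have "\<forall>B\<in>insert (insert a A) (P - {A}). \<forall>C\<in>insert (insert a A) (P - {A}). B \<noteq> C \<longrightarrow> B \<inter> C = {}"
  proof (intro ballI impI)
    fix B C assume B: "B \<in> insert (insert a A) (P - {A})" and C: "C \<in> insert (insert a A) (P - {A})" and ne: "B \<noteq> C"
    show "B \<inter> C = {}"
    proof (cases "B = insert a A")
      case True
      then have "C \<in> P" "C \<noteq> A" using C ne by auto
      then show ?thesis using True D[OF A, of C] aB by auto
    next
      case False
      then have B': "B \<in> P" "B \<noteq> A" using B by auto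
      show ?thesis
      proof (cases "C = insert a A")
        case True
        then show ?thesis using B' D[OF A, of B] aB by auto
      next
        case False
        then have "C \<in> P" using C by auto
        then show ?thesis using D[OF B'(1)] ne by auto
      qed
    qed
  qed
  ultimately show ?thesis using E U unfolding part_def' by auto
qed

lemma cover_part:
  assumes Q: "partition_on (insert a S) Q" and a: "a \<notin> S"
  shows "(\<exists>P. partition_on S P \<and> Q = insert {a} P) \<or>
         (\<exists>P A. partition_on S P \<and> A \<in> P \<and> Q = insert (insert a A) (P - {A}))"
proof -
  have U: "\<Union>Q = insert a S" and D: "\<And>B C. B \<in> Q \<Longrightarrow> C \<in> Q \<Longrightarrow> B \<noteq> C \<Longrightarrow> B \<inter> C = {}"
    and E: "{} \<notin> Q" using Q unfolding part_def' by auto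
  obtain B where B: "B \<in> Q" "a \<in> B" using U by auto
  have uniq: "\<And>C. C \<in> Q \<Longrightarrow> a \<in> C \<Longrightarrow> C = B"
  proof (rule ccontr)
    fix C assume "C \<in> Q" "a \<in> C" "C \<noteq> B"
    then show False using D[of C B] B by auto
  qed
  show ?thesis
  proof (cases "B = {a}")
    case True
    have "\<Union>(Q - {{a}}) = S"
    proof
      show "\<Union>(Q - {{a}}) \<subseteq> S"
      proof
        fix x assume "x \<in> \<Union>(Q - {{a}})"
        then obtain C where C: "C \<in> Q" "C \<noteq> {a}" "x \<in> C" by auto
        then have "x \<noteq> a" using uniq True by auto
        then show "x \<in> S" using U C by auto
      qed
    next
      show "S \<subseteq> \<Union>(Q - {{a}})"
      proof
        fix x assume "x \<in> S"
        then obtain C where C: "C \<in> Q" "x \<in> C" using U by auto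
        then have "C \<noteq> {a}" using a \<open>x \<in> S\<close> by auto
        then show "x \<in> \<Union>(Q - {{a}})" using C by auto
      qed
    qed
    then have "partition_on S (Q - {{a}})" using D E unfolding part_def' by auto
    moreover have "Q = insert {a} (Q - {{a}})" using B True by auto
    ultimately show ?thesis by blast
  next
    case False
    define A where "A = B - {a}"
    have Ane: "A \<noteq> {}" using False B by (auto simp: A_def)
    have aA: "a \<notin> A" by (simp add: A_def)
    have BA: "B = insert a A" using B by (auto simp: A_def)
    have AQ: "A \<notin> Q"
    proof
      assume "A \<in> Q"
      moreover have "A \<noteq> B" using BA aA by auto
      ultimately have "A \<inter> B = {}" using D B by auto
      then show False using Ane BA by auto
    qed
    define P where "P = insert A (Q - {B})"
    have "\<Union>P = S"
    proof
      show "\<Union>P \<subseteq> S"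
      proof
        fix x assume "x \<in> \<Union>P"
        then obtain C where C: "C \<in> P" "x \<in> C" by auto
        show "x \<in> S"
        proof (cases "C = A")
          case True then show ?thesis using C B U by (auto simp: A_def)
        next
          case False
          then have "C \<in> Q" "C \<noteq> B" using C by (auto simp: P_def)
          then have "a \<notin> C" using uniq by auto
          then show ?thesis using C \<open>C \<in> Q\<close> U by auto
        qed
      qed
    next
      show "S \<subseteq> \<Union>P"
      proof
        fix x assume x: "x \<in> S"
        then obtain C where C: "C \<in> Q" "x \<in> C" using U by auto
        show "x \<in> \<Union>P"
        proof (cases "C = B")
          case True then have "x \<in> A" using C x a by (auto simp: A_def)
          then show ?thesis by (auto simp: P_def)
        next
          case False then show ?thesis using C by (auto simp: P_def)
        qed
      qed
    qed
    moreover have "\<forall>C1\<in>P. \<forall>C2\<in>P. C1 \<noteq> C2 \<longrightarrow> C1 \<inter> C2 = {}"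
    proof (intro ballI impI)
      fix C1 C2 assume C1: "C1 \<in> P" and C2: "C2 \<in> P" and ne: "C1 \<noteq> C2"
      have mem: "\<And>C. C \<in> P \<Longrightarrow> C \<noteq> A \<Longrightarrow> C \<in> Q \<and> C \<noteq> B" by (auto simp: P_def)
      have AB: "A \<subseteq> B" by (auto simp: A_def)
      show "C1 \<inter> C2 = {}"
      proof (cases "C1 = A")
        case True
        then have "C2 \<in> Q" "C2 \<noteq> B" using mem[OF C2] ne by auto
        then show ?thesis using D[OF B(1), of C2] AB True by auto
      next
        case False
        note F1 = this
        show ?thesis
        proof (cases "C2 = A")
          case True
          then have "C1 \<in> Q" "C1 \<noteq> B" using mem[OF C1] F1 by auto
          then show ?thesis using D[OF B(1), of C1] AB True by auto
        next
          case False
          then show ?thesis using mem[OF C1 F1] mem[OF C2 False] D ne by auto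
        qed
      qed
    qed
    moreover have "{} \<notin> P" using E Ane by (auto simp: P_def)
    ultimately have "partition_on S P" unfolding part_def' by blast
    moreover have "Q = insert (insert a A) (P - {A})"
      using AQ B BA by (auto simp: P_def)
    moreover have "A \<in> P" by (simp add: P_def)
    ultimately show ?thesis by blast
  qed
qed

lemma partition_insert_sum:
  assumes a: "a \<notin> S" and S: "finite S"
  shows "(\<Sum>P\<in>{P. partition_on (insert a S) P}. f P) =
    (\<Sum>P\<in>{P. partition_on S P}. f (insert {a} P) + (\<Sum>A\<in>P. f (insert (insert a A) (P - {A}))))"
proof -
  let ?Ps = "{P. partition_on S P}"
  let ?g1 = "\<lambda>P. insert {a} P"
  let ?g2 = "\<lambda>(P, A). insert (insert a A) (P - {A})"
  let ?Sg = "Sigma ?Ps (\<lambda>P. P)"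
  have finPs: "finite ?Ps" using finitely_many_partition_on[OF S] .
  have finSg: "finite ?Sg" using finPs by (auto intro!: finite_SigmaI finite_elements[OF S])
  have inj1: "inj_on ?g1 ?Ps"
  proof (rule inj_onI)
    fix P P' assume P: "P \<in> ?Ps" and P': "P' \<in> ?Ps" and eq: "?g1 P = ?g1 P'"
    have "{a} \<notin> P" "{a} \<notin> P'" using P P' a unfolding part_def' by auto
    then show "P = P'" using eq by (metis insert_ident)
  qed
  have inj2: "inj_on ?g2 ?Sg"
  proof (rule inj_onI)
    fix x y assume x: "x \<in> ?Sg" and y: "y \<in> ?Sg" and eq: "?g2 x = ?g2 y"
    obtain P A where xPA: "x = (P, A)" and P: "partition_on S P" and A: "A \<in> P" using x by auto
    obtain P' A' where yPA: "y = (P', A')" and P': "partition_on S P'" and A': "A' \<in> P'" using y by auto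
    have aP: "\<And>C. C \<in> P \<Longrightarrow> a \<notin> C" using P a unfolding part_def' by auto
    have aP': "\<And>C. C \<in> P' \<Longrightarrow> a \<notin> C" using P' a unfolding part_def' by auto
    have e: "insert (insert a A) (P - {A}) = insert (insert a A') (P' - {A'})" using eq xPA yPA by simp
    have "insert a A \<in> insert (insert a A') (P' - {A'})" using e by auto
    then have "insert a A = insert a A'" using aP' by auto
    then have AA: "A = A'" using aP[OF A] aP'[OF A'] by (metis insert_ident)
    have "insert a A \<notin> P - {A}" "insert a A \<notin> P' - {A'}" using aP aP' by auto
    then have "P - {A} = P' - {A'}" using e AA by (metis insert_ident)
    then have "P = P'" using A A' AA by (metis insert_Diff)
    then show "x = y" using xPA yPA AA by simp
  qed
  have disj: "?g1 ` ?Ps \<inter> ?g2 ` ?Sg = {}"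
  proof (rule ccontr)
    assume "?g1 ` ?Ps \<inter> ?g2 ` ?Sg \<noteq> {}"
    then obtain P P' A where P: "partition_on S P" and P': "partition_on S P'" and A: "A \<in> P'"
      and e: "insert {a} P = insert (insert a A) (P' - {A})" by auto
    have aP': "\<And>C. C \<in> P' \<Longrightarrow> a \<notin> C" using P' a unfolding part_def' by auto
    have "A \<noteq> {}" using P' A unfolding part_def' by auto
    moreover have "{a} \<in> insert (insert a A) (P' - {A})" using e by auto
    ultimately show False using aP' A by auto
  qed
  have cov: "{P. partition_on (insert a S) P} = ?g1 ` ?Ps \<union> ?g2 ` ?Sg"
  proof
    show "{P. partition_on (insert a S) P} \<subseteq> ?g1 ` ?Ps \<union> ?g2 ` ?Sg"
    proof
      fix Q assume "Q \<in> {P. partition_on (insert a S) P}"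
      then have Q: "partition_on (insert a S) Q" by simp
      from cover_part[OF Q a] show "Q \<in> ?g1 ` ?Ps \<union> ?g2 ` ?Sg"
      proof
        assume "\<exists>P. partition_on S P \<and> Q = insert {a} P"
        then show ?thesis by auto
      next
        assume "\<exists>P A. partition_on S P \<and> A \<in> P \<and> Q = insert (insert a A) (P - {A})"
        then obtain P A where "partition_on S P" "A \<in> P" "Q = insert (insert a A) (P - {A})" by blast
        then have "Q = ?g2 (P, A)" "(P, A) \<in> ?Sg" by auto
        then show ?thesis by blast
      qed
    qed
  next
    show "?g1 ` ?Ps \<union> ?g2 ` ?Sg \<subseteq> {P. partition_on (insert a S) P}"
      using g1_part[OF _ a] g2_part[OF _ a] by auto
  qed
  have "(\<Sum>P\<in>{P. partition_on (insert a S) P}. f P) = sum f (?g1 ` ?Ps) + sum f (?g2 ` ?Sg)"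
    unfolding cov by (rule sum.union_disjoint) (use finPs finSg disj in auto)
  also have "sum f (?g1 ` ?Ps) = (\<Sum>P\<in>?Ps. f (insert {a} P))"
    by (subst sum.reindex[OF inj1]) simp
  also have "sum f (?g2 ` ?Sg) = (\<Sum>(P, A)\<in>?Sg. f (insert (insert a A) (P - {A})))"
    by (subst sum.reindex[OF inj2]) (simp add: case_prod_beta)
  also have "\<dots> = (\<Sum>P\<in>?Ps. \<Sum>A\<in>P. f (insert (insert a A) (P - {A})))"
    by (rule sum.Sigma[symmetric]) (use finPs finite_elements[OF S] in auto)
  finally show ?thesis by (simp add: sum.distrib)
qed

fun Gf :: "(nat \<Rightarrow> nat) \<Rightarrow> real \<Rightarrow> nat \<Rightarrow> nat \<Rightarrow> nat \<Rightarrow> real" where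
  "Gf i x 0 k h = (if h = 0 then 1 else 0)"
| "Gf i x (Suc m) k h = real h * x ^ ((i (Suc k) - i k) * h) *
     (Gf i x m (Suc k) (h - 1) - Gf i x m (Suc k) (Suc h))"

definition Phi :: "(nat \<Rightarrow> nat) \<Rightarrow> real \<Rightarrow> nat \<Rightarrow> nat \<Rightarrow> nat \<Rightarrow> nat \<Rightarrow> real" where
  "Phi i x s k h q = (-1) ^ (h + q - 1) * fact (h + q - 1) * Gf i x (s - k) k h"

lemma Phi_step:
  assumes hq: "1 \<le> h + q" and k: "k < s"
  shows "x ^ ((i (Suc k) - i k) * h) *
     (Phi i x s (Suc k) (Suc h) q + real h * Phi i x s (Suc k) (h - 1) (Suc q)
       + real q * Phi i x s (Suc k) (Suc h) (q - 1)) = Phi i x s k h q"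
proof -
  obtain p where p: "h + q = Suc p" using hq by (cases "h + q") auto
  obtain m where m: "s - k = Suc m" using k by (cases "s - k") auto
  have m': "s - Suc k = m" using m by auto
  define G1 where "G1 = Gf i x m (Suc k) (h - 1)"
  define G2 where "G2 = Gf i x m (Suc k) (Suc h)"
  define c where "c = ((-1::real) ^ p * fact p)"
  have t1: "Phi i x s (Suc k) (Suc h) q = - c * real (Suc p) * G2"
    using p by (simp add: Phi_def m' G2_def c_def fact_Suc algebra_simps)
  have t2: "real h * Phi i x s (Suc k) (h - 1) (Suc q) = real h * c * G1"
    by (cases h) (use p in \<open>auto simp: Phi_def m' G1_def c_def\<close>)
  have t3: "real q * Phi i x s (Suc k) (Suc h) (q - 1) = real q * c * G2"
    by (cases q) (use p in \<open>auto simp: Phi_def m' G2_def c_def\<close>)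
  have rhs: "Phi i x s k h q = c * (real h * x ^ ((i (Suc k) - i k) * h) * (G1 - G2))"
    using p by (simp add: Phi_def m c_def G1_def G2_def)
  have hp: "real (Suc p) = real h + real q" using p by simp
  show ?thesis unfolding t1 t2 t3 rhs hp by (simp add: algebra_simps)
qed

definition Eblk :: "(nat \<Rightarrow> nat) \<Rightarrow> nat \<Rightarrow> nat set \<Rightarrow> nat" where
  "Eblk i k A = card {t\<in>{1..<i k}. odd (card {j\<in>A. i j \<le> t})}"
definition ew :: "(nat \<Rightarrow> nat) \<Rightarrow> nat \<Rightarrow> nat set set \<Rightarrow> nat" where
  "ew i k P = (\<Sum>A\<in>P. Eblk i k A)"
definition hP :: "nat set set \<Rightarrow> nat" where "hP P = card {A\<in>P. odd (card A)}"
definition qP :: "nat set set \<Rightarrow> nat" where "qP P = card {A\<in>P. even (card A)}"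

lemma Eblk_Suc:
  assumes "1 \<le> i k" "i k \<le> i (Suc k)" "\<And>j. j \<in> A \<Longrightarrow> i j \<le> i k"
  shows "Eblk i (Suc k) A = Eblk i k A + (if odd (card A) then i (Suc k) - i k else 0)"
proof -
  let ?Pd = "\<lambda>t. odd (card {j\<in>A. i j \<le> t})"
  have "{t\<in>{1..<i (Suc k)}. ?Pd t} = {t\<in>{1..<i k}. ?Pd t} \<union> {t\<in>{i k..<i (Suc k)}. ?Pd t}"
    using assms by auto
  moreover have "{t\<in>{i k..<i (Suc k)}. ?Pd t} = (if odd (card A) then {i k..<i (Suc k)} else {})"
  proof -
    have "\<And>t. t \<ge> i k \<Longrightarrow> {j\<in>A. i j \<le> t} = A" using assms(3) by force
    then show ?thesis by auto
  qed
  moreover have "card ({t\<in>{1..<i k}. ?Pd t} \<union> {t\<in>{i k..<i (Suc k)}. ?Pd t}) =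
     card {t\<in>{1..<i k}. ?Pd t} + card {t\<in>{i k..<i (Suc k)}. ?Pd t}"
    by (rule card_Un_disjoint) auto
  ultimately show ?thesis unfolding Eblk_def by auto
qed

lemma Eblk_ins: "Eblk i (Suc k) (insert (Suc k) A) = Eblk i (Suc k) A"
proof -
  have "\<And>t. t < i (Suc k) \<Longrightarrow> {j\<in>insert (Suc k) A. i j \<le> t} = {j\<in>A. i j \<le> t}" by auto
  then have "{t\<in>{1..<i (Suc k)}. odd (card {j\<in>insert (Suc k) A. i j \<le> t})} = {t\<in>{1..<i (Suc k)}. odd (card {j\<in>A. i j \<le> t})}"
    by auto
  then show ?thesis unfolding Eblk_def by simp
qed

lemma Eblk_empty: "Eblk i k {} = 0" by (simp add: Eblk_def)

lemma card_filter_swap: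
  assumes P: "finite P" and A: "A \<in> P" and X: "X \<notin> P - {A}"
  shows "int (card {B\<in>insert X (P - {A}). Q B}) = int (card {B\<in>P. Q B}) - (if Q A then 1 else 0) + (if Q X then 1 else 0)"
proof -
  have e: "{B\<in>insert X (P - {A}). Q B} = (if Q X then insert X else (\<lambda>S. S)) ({B\<in>P. Q B} - {A})" by auto
  have f: "finite ({B\<in>P. Q B} - {A})" using P by auto
  have c: "int (card ({B\<in>P. Q B} - {A})) = int (card {B\<in>P. Q B}) - (if Q A then 1 else 0)"
  proof (cases "Q A")
    case True
    then have "A \<in> {B\<in>P. Q B}" using A by auto
    moreover have "card {B\<in>P. Q B} \<ge> 1" using calculation P by (simp add: Suc_le_eq card_gt_0_iff) blast
    ultimately show ?thesis using P by (simp add: card_Diff_singleton of_nat_diff)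
  qed simp
  have XS: "X \<notin> {B\<in>P. Q B} - {A}" using X by auto
  show ?thesis
  proof (cases "Q X")
    case True
    then have "{B\<in>insert X (P - {A}). Q B} = insert X ({B\<in>P. Q B} - {A})" by auto
    then show ?thesis using True card_insert_disjoint[OF f XS] c by simp
  next
    case False
    then have "{B\<in>insert X (P - {A}). Q B} = {B\<in>P. Q B} - {A}" by auto
    then show ?thesis using False c by simp
  qed
qed

lemma part_single: "partition_on {a} P \<longleftrightarrow> P = {{a}}"
proof
  assume P: "partition_on {a} P"
  then have U: "\<Union>P = {a}" and E: "{} \<notin> P" unfolding part_def' by auto
  then have "\<And>B. B \<in> P \<Longrightarrow> B = {a}" by (metis Union_upper subset_singleton_iff)
  moreover have "P \<noteq> {}" using U by auto
  ultimately show "P = {{a}}" by blast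
qed (simp add: partition_on_space)

lemma card_filter_compl: "finite P \<Longrightarrow> card {A\<in>P. Q A} + card {A\<in>P. \<not> Q A} = card P"
proof -
  assume f: "finite P"
  have "card ({A\<in>P. Q A} \<union> {A\<in>P. \<not> Q A}) = card {A\<in>P. Q A} + card {A\<in>P. \<not> Q A}"
    by (rule card_Un_disjoint) (use f in auto)
  moreover have "{A\<in>P. Q A} \<union> {A\<in>P. \<not> Q A} = P" by auto
  ultimately show ?thesis by simp
qed

lemma sum_if_const: "finite P \<Longrightarrow> (\<Sum>A\<in>P. if Q A then (c::'a::comm_semiring_1) else d) = of_nat (card {A\<in>P. Q A}) * c + of_nat (card {A\<in>P. \<not> Q A}) * d"
proof -
  assume f: "finite P"
  have "(\<Sum>A\<in>P. if Q A then c else d) = (\<Sum>A\<in>P \<inter> {A. Q A}. c) + (\<Sum>A\<in>P \<inter> - {A. Q A}. d)"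
    using f by (rule sum.If_cases)
  moreover have "P \<inter> {A. Q A} = {A\<in>P. Q A}" "P \<inter> - {A. Q A} = {A\<in>P. \<not> Q A}" by auto
  ultimately show ?thesis by (simp add: mult.commute)
qed

lemma mono_le:
  assumes mono: "\<And>j. 1 \<le> j \<Longrightarrow> j < s \<Longrightarrow> i j \<le> i (Suc j)"
  shows "1 \<le> j \<Longrightarrow> j \<le> k \<Longrightarrow> k \<le> s \<Longrightarrow> i j \<le> (i k :: nat)"
proof (induction k)
  case 0 then show ?case by simp
next
  case (Suc k)
  show ?case
  proof (cases "j = Suc k")
    case False
    then have "i j \<le> i k" using Suc by auto
    also have "i k \<le> i (Suc k)" using mono[of k] Suc False by auto
    finally show ?thesis .
  qed simp
qed

lemma invariant:
  fixes i :: "nat \<Rightarrow> nat" and x :: real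
  assumes mono: "\<And>j. 1 \<le> j \<Longrightarrow> j < s \<Longrightarrow> i j \<le> i (Suc j)" and i1: "1 \<le> i 1"
  shows "1 \<le> k \<Longrightarrow> k \<le> s \<Longrightarrow> (\<Sum>P\<in>{P. partition_on {1..k} P}. x ^ (ew i k P) * Phi i x s k (hP P) (qP P)) = Gf i x (s - 1) 1 1"
proof (induction k rule: dec_induct)
  case base
  have "{P. partition_on {1..1::nat} P} = {{{1}}}" by (simp add: part_single)
  moreover have "ew i 1 {{1}} = 0"
  proof -
    have e: "{j. j = Suc 0 \<and> i j \<le> t} = {}" if "t < i (Suc 0)" for t using that by auto
    have "{t\<in>{1..<i 1}. odd (card {j\<in>{1::nat}. i j \<le> t})} = {}"
      by (auto simp: e)
    then show ?thesis by (simp add: ew_def Eblk_def)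
  qed
  moreover have "hP {{1}} = 1"
  proof -
    have "{A\<in>{{1::nat}}. odd (card A)} = {{1}}" by auto
    then show ?thesis unfolding hP_def by (simp only:) simp
  qed
  moreover have "qP {{1}} = 0" by (simp add: qP_def)
  ultimately show ?case by (simp add: Phi_def)
next
  case (step k)
  note IH = step.IH
  have k1: "1 \<le> k" and ks: "Suc k \<le> s" using step by auto
  then have IH': "(\<Sum>P\<in>{P. partition_on {1..k} P}. x ^ (ew i k P) * Phi i x s k (hP P) (qP P)) = Gf i x (s - 1) 1 1"
    using IH by auto
  define d where "d = i (Suc k) - i k"
  have ik1: "1 \<le> i k" using mono_le[where i=i and s=s and j=1 and k=k, OF mono] i1 k1 ks by auto
  have ikk: "i k \<le> i (Suc k)" using mono[of k] k1 ks by auto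
  have ins: "{1..Suc k} = insert (Suc k) {1..k}" by auto
  have trm: "x ^ ew i (Suc k) (insert {Suc k} P) * Phi i x s (Suc k) (hP (insert {Suc k} P)) (qP (insert {Suc k} P)) +
      (\<Sum>A\<in>P. x ^ ew i (Suc k) (insert (insert (Suc k) A) (P - {A})) *
        Phi i x s (Suc k) (hP (insert (insert (Suc k) A) (P - {A}))) (qP (insert (insert (Suc k) A) (P - {A}))))
      = x ^ (ew i k P) * Phi i x s k (hP P) (qP P)"
    if P: "partition_on {1..k} P" for P
  proof -
    have fP: "finite P" using finite_elements[OF _ P] by simp
    have blk: "\<And>A. A \<in> P \<Longrightarrow> A \<subseteq> {1..k} \<and> A \<noteq> {} \<and> finite A"
      using P unfolding part_def' by (auto intro: finite_subset)
    have nk: "\<And>A. A \<in> P \<Longrightarrow> Suc k \<notin> A" using blk by fastforce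
    define h where "h = hP P"
    define q where "q = qP P"
    have hq: "h + q = card P" using card_filter_compl[OF fP, of "\<lambda>A. odd (card A)"]
      by (simp add: h_def q_def hP_def qP_def)
    have "P \<noteq> {}" using P k1 unfolding part_def' by auto
    then have hq1: "1 \<le> h + q" using hq fP by (simp add: Suc_le_eq card_gt_0_iff)
    have EP: "ew i (Suc k) P = ew i k P + d * h"
    proof -
      have "ew i (Suc k) P = (\<Sum>A\<in>P. Eblk i k A + (if odd (card A) then d else 0))"
        unfolding ew_def d_def
      proof (rule sum.cong)
        fix A assume A: "A \<in> P"
        have "\<And>j. j \<in> A \<Longrightarrow> i j \<le> i k" using blk[OF A] mono_le[where i=i and s=s, OF mono] ks by auto
        then show "Eblk i (Suc k) A = Eblk i k A + (if odd (card A) then i (Suc k) - i k else 0)"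
          by (rule Eblk_Suc[OF ik1 ikk])
      qed simp
      also have "\<dots> = ew i k P + d * h"
        by (simp add: sum.distrib ew_def sum_if_const[OF fP] h_def hP_def)
      finally show ?thesis .
    qed
    have t1e: "ew i (Suc k) (insert {Suc k} P) = ew i k P + d * h"
    proof -
      have "{Suc k} \<notin> P" using nk by auto
      then have "ew i (Suc k) (insert {Suc k} P) = Eblk i (Suc k) {Suc k} + ew i (Suc k) P"
        using fP by (simp add: ew_def)
      moreover have "Eblk i (Suc k) {Suc k} = 0" using Eblk_ins[of i k "{}"] by (simp add: Eblk_empty)
      ultimately show ?thesis using EP by simp
    qed
    have t1h: "hP (insert {Suc k} P) = Suc h" "qP (insert {Suc k} P) = q"
    proof -
      have "{Suc k} \<notin> P" using nk by auto
      moreover have "{A\<in>insert {Suc k} P. odd (card A)} = insert {Suc k} {A\<in>P. odd (card A)}" by auto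
      moreover have "{A\<in>insert {Suc k} P. even (card A)} = {A\<in>P. even (card A)}" by auto
      ultimately show "hP (insert {Suc k} P) = Suc h" "qP (insert {Suc k} P) = q"
        using fP unfolding hP_def qP_def h_def q_def by (simp_all add: card_insert_disjoint)
    qed
    have t2: "x ^ ew i (Suc k) (insert (insert (Suc k) A) (P - {A})) *
        Phi i x s (Suc k) (hP (insert (insert (Suc k) A) (P - {A}))) (qP (insert (insert (Suc k) A) (P - {A})))
       = x ^ (ew i k P + d * h) * (if odd (card A) then Phi i x s (Suc k) (h - 1) (Suc q) else Phi i x s (Suc k) (Suc h) (q - 1))"
      if A: "A \<in> P" for A
    proof -
      define X where "X = insert (Suc k) A"
      have XP: "X \<notin> P - {A}" using nk by (auto simp: X_def)
      have cX: "card X = Suc (card A)" using blk[OF A] nk[OF A] by (simp add: X_def)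
      have e: "ew i (Suc k) (insert X (P - {A})) = ew i (Suc k) P"
      proof -
        have "ew i (Suc k) (insert X (P - {A})) = Eblk i (Suc k) X + (\<Sum>B\<in>P - {A}. Eblk i (Suc k) B)"
          using XP fP by (simp add: ew_def)
        also have "Eblk i (Suc k) X = Eblk i (Suc k) A" by (simp add: X_def Eblk_ins)
        also have "Eblk i (Suc k) A + (\<Sum>B\<in>P - {A}. Eblk i (Suc k) B) = ew i (Suc k) P"
          using A fP by (simp add: ew_def sum.remove)
        finally show ?thesis .
      qed
      have hh: "int (hP (insert X (P - {A}))) = int h - (if odd (card A) then 1 else 0) + (if odd (card X) then 1 else 0)"
        using card_filter_swap[OF fP A XP, of "\<lambda>B. odd (card B)"] by (simp add: hP_def h_def)
      have qq: "int (qP (insert X (P - {A}))) = int q - (if even (card A) then 1 else 0) + (if even (card X) then 1 else 0)"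
        using card_filter_swap[OF fP A XP, of "\<lambda>B. even (card B)"] by (simp add: qP_def q_def)
      show ?thesis
      proof (cases "odd (card A)")
        case True
        then have "hP (insert X (P - {A})) = h - 1" "qP (insert X (P - {A})) = Suc q"
          using hh qq cX by auto
        then show ?thesis using True e EP by (simp add: X_def)
      next
        case False
        then have "hP (insert X (P - {A})) = Suc h" "qP (insert X (P - {A})) = q - 1"
          using hh qq cX by auto
        then show ?thesis using False e EP by (simp add: X_def)
      qed
    qed
    have "(\<Sum>A\<in>P. x ^ ew i (Suc k) (insert (insert (Suc k) A) (P - {A})) *
        Phi i x s (Suc k) (hP (insert (insert (Suc k) A) (P - {A}))) (qP (insert (insert (Suc k) A) (P - {A}))))
       = x ^ (ew i k P + d * h) * (real h * Phi i x s (Suc k) (h - 1) (Suc q) + real q * Phi i x s (Suc k) (Suc h) (q - 1))"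
    proof -
      have "(\<Sum>A\<in>P. x ^ ew i (Suc k) (insert (insert (Suc k) A) (P - {A})) *
        Phi i x s (Suc k) (hP (insert (insert (Suc k) A) (P - {A}))) (qP (insert (insert (Suc k) A) (P - {A}))))
        = (\<Sum>A\<in>P. x ^ (ew i k P + d * h) * (if odd (card A) then Phi i x s (Suc k) (h - 1) (Suc q) else Phi i x s (Suc k) (Suc h) (q - 1)))"
        by (rule sum.cong) (simp_all add: t2)
      also have "\<dots> = x ^ (ew i k P + d * h) * (\<Sum>A\<in>P. if odd (card A) then Phi i x s (Suc k) (h - 1) (Suc q) else Phi i x s (Suc k) (Suc h) (q - 1))"
        by (simp add: sum_distrib_left)
      also have "(\<Sum>A\<in>P. if odd (card A) then Phi i x s (Suc k) (h - 1) (Suc q) else Phi i x s (Suc k) (Suc h) (q - 1))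
          = real h * Phi i x s (Suc k) (h - 1) (Suc q) + real q * Phi i x s (Suc k) (Suc h) (q - 1)"
        by (simp add: sum_if_const[OF fP] h_def q_def hP_def qP_def)
      finally show ?thesis .
    qed
    then have "x ^ ew i (Suc k) (insert {Suc k} P) * Phi i x s (Suc k) (hP (insert {Suc k} P)) (qP (insert {Suc k} P)) +
      (\<Sum>A\<in>P. x ^ ew i (Suc k) (insert (insert (Suc k) A) (P - {A})) *
        Phi i x s (Suc k) (hP (insert (insert (Suc k) A) (P - {A}))) (qP (insert (insert (Suc k) A) (P - {A}))))
      = x ^ (ew i k P) * (x ^ (d * h) * (Phi i x s (Suc k) (Suc h) q + real h * Phi i x s (Suc k) (h - 1) (Suc q)
       + real q * Phi i x s (Suc k) (Suc h) (q - 1)))"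
      by (simp add: t1e t1h power_add algebra_simps)
    also have "x ^ (d * h) * (Phi i x s (Suc k) (Suc h) q + real h * Phi i x s (Suc k) (h - 1) (Suc q)
       + real q * Phi i x s (Suc k) (Suc h) (q - 1)) = Phi i x s k h q"
      unfolding d_def by (rule Phi_step[OF hq1]) (use ks in auto)
    finally show ?thesis by (simp add: h_def q_def)
  qed
  have "(\<Sum>P\<in>{P. partition_on {1..Suc k} P}. x ^ (ew i (Suc k) P) * Phi i x s (Suc k) (hP P) (qP P))
    = (\<Sum>P\<in>{P. partition_on {1..k} P}. x ^ (ew i k P) * Phi i x s k (hP P) (qP P))"
    unfolding ins by (subst partition_insert_sum) (auto intro!: sum.cong simp: trm)
  then show ?case using IH' by simp
qed

definition PS :: "nat \<Rightarrow> nat \<Rightarrow> int \<Rightarrow> (nat \<Rightarrow> int) set" where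
  "PS m k h = {\<delta>. (\<forall>j. (j < k \<or> k + m < j) \<longrightarrow> \<delta> j = 0) \<and> \<delta> k = h \<and> \<delta> (k + m) = 0 \<and>
     (\<forall>j. k \<le> j \<longrightarrow> j < k + m \<longrightarrow> \<bar>\<delta> (Suc j) - \<delta> j\<bar> = 1) \<and>
     (\<forall>j. k \<le> j \<longrightarrow> j < k + m \<longrightarrow> \<delta> j \<ge> 1)}"

definition Wt :: "(nat \<Rightarrow> nat) \<Rightarrow> real \<Rightarrow> nat \<Rightarrow> nat \<Rightarrow> (nat \<Rightarrow> int) \<Rightarrow> real" where
  "Wt i x m k \<delta> = (\<Prod>j\<in>{k..<k+m}. real_of_int ((\<delta> j - \<delta> (Suc j)) * \<delta> j) * x ^ ((i (Suc j) - i j) * nat (\<delta> j)))"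

lemma PS_0: "PS 0 k h = (if h = 0 then {\<lambda>_. 0} else {})"
proof (cases "h = 0")
  case True
  have z: "\<delta> = (\<lambda>_. 0)" if d: "\<delta> \<in> PS 0 k 0" for \<delta>
  proof
    fix j
    have A: "\<forall>j. (j < k \<or> k < j) \<longrightarrow> \<delta> j = 0" and B: "\<delta> k = 0"
      using d by (simp_all add: PS_def)
    show "\<delta> j = 0"
    proof (cases "j = k")
      case True then show ?thesis using B by simp
    next
      case False then have "j < k \<or> k < j" by arith
      then show ?thesis by (rule A[rule_format])
    qed
  qed
  have z2: "(\<lambda>_. 0) \<in> PS 0 k 0" unfolding PS_def by simp
  have "PS 0 k 0 = {\<lambda>_. 0}"
  proof (intro equalityI subsetI)
    fix \<delta> assume "\<delta> \<in> PS 0 k 0"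
    then have "\<delta> = (\<lambda>_. 0)" by (rule z)
    then show "\<delta> \<in> {\<lambda>_. 0}" by (simp only: singleton_iff)
  next
    fix \<delta> assume "\<delta> \<in> {\<lambda>_::nat. 0::int}"
    then have "\<delta> = (\<lambda>_. 0)" by (simp only: singleton_iff)
    then show "\<delta> \<in> PS 0 k 0" using z2 by (simp only:)
  qed
  then show ?thesis using True by simp
next
  case False
  have "PS 0 k h = {}"
  proof (rule equals0I)
    fix \<delta> assume "\<delta> \<in> PS 0 k h"
    then have "\<delta> k = h" "\<delta> k = 0" by (simp_all add: PS_def)
    then show False using False by simp
  qed
  then show ?thesis using False by (simp only: if_False)
qed

lemma PS_Suc_0: "PS (Suc m) k 0 = {}"
  unfolding PS_def by auto

lemma PS_Suc:
  assumes h: "h \<ge> 1"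
  shows "PS (Suc m) k h = (\<lambda>\<delta>. \<delta>(k := h)) ` (PS m (Suc k) (h - 1) \<union> PS m (Suc k) (h + 1))"
proof
  show "PS (Suc m) k h \<subseteq> (\<lambda>\<delta>. \<delta>(k := h)) ` (PS m (Suc k) (h - 1) \<union> PS m (Suc k) (h + 1))"
  proof
    fix \<delta> assume d: "\<delta> \<in> PS (Suc m) k h"
    have "\<delta> = (\<delta>(k := 0))(k := h)" using d by (auto simp: PS_def)
    moreover have "\<delta>(k := 0) \<in> PS m (Suc k) (h - 1) \<union> PS m (Suc k) (h + 1)"
    proof -
      have st: "\<bar>\<delta> (Suc k) - \<delta> k\<bar> = 1" using d by (auto simp: PS_def)
      have dk: "\<delta> k = h" using d by (auto simp: PS_def)
      have "\<delta>(k := 0) \<in> PS m (Suc k) (\<delta> (Suc k))"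
        using d unfolding PS_def by (auto simp: le_Suc_eq)
      moreover have "\<delta> (Suc k) = h - 1 \<or> \<delta> (Suc k) = h + 1" using st dk by auto
      ultimately show ?thesis by auto
    qed
    ultimately show "\<delta> \<in> (\<lambda>\<delta>. \<delta>(k := h)) ` (PS m (Suc k) (h - 1) \<union> PS m (Suc k) (h + 1))" by blast
  qed
next
  show "(\<lambda>\<delta>. \<delta>(k := h)) ` (PS m (Suc k) (h - 1) \<union> PS m (Suc k) (h + 1)) \<subseteq> PS (Suc m) k h"
  proof
    fix \<delta> assume "\<delta> \<in> (\<lambda>\<delta>. \<delta>(k := h)) ` (PS m (Suc k) (h - 1) \<union> PS m (Suc k) (h + 1))"
    then obtain \<delta>' g where d': "\<delta>' \<in> PS m (Suc k) g" and g: "g = h - 1 \<or> g = h + 1" and e: "\<delta> = \<delta>'(k := h)" by auto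
    have a1: "\<forall>j. (j < Suc k \<or> Suc k + m < j) \<longrightarrow> \<delta>' j = 0" and a2: "\<delta>' (Suc k) = g"
      and a3: "\<delta>' (Suc k + m) = 0"
      and a4: "\<forall>j. Suc k \<le> j \<longrightarrow> j < Suc k + m \<longrightarrow> \<bar>\<delta>' (Suc j) - \<delta>' j\<bar> = 1"
      and a5: "\<forall>j. Suc k \<le> j \<longrightarrow> j < Suc k + m \<longrightarrow> \<delta>' j \<ge> 1"
      using d' unfolding PS_def by auto
    show "\<delta> \<in> PS (Suc m) k h"
      unfolding PS_def e
    proof (intro CollectI conjI allI impI)
      fix j assume "j < k \<or> k + Suc m < j" then show "(\<delta>'(k := h)) j = 0" using a1 by auto
    next
      show "(\<delta>'(k := h)) k = h" by simp
    next
      show "(\<delta>'(k := h)) (k + Suc m) = 0" using a3 by simp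
    next
      fix j assume j: "k \<le> j" "j < k + Suc m"
      show "\<bar>(\<delta>'(k := h)) (Suc j) - (\<delta>'(k := h)) j\<bar> = 1"
      proof (cases "j = k")
        case True then show ?thesis using a2 g by auto
      next
        case False then show ?thesis using a4 j by auto
      qed
    next
      fix j assume j: "k \<le> j" "j < k + Suc m"
      show "(\<delta>'(k := h)) j \<ge> 1"
      proof (cases "j = k")
        case True then show ?thesis using h by auto
      next
        case False then show ?thesis using a5 j by auto
      qed
    qed
  qed
qed

lemma PS_zero_at: "\<delta> \<in> PS m (Suc k) g \<Longrightarrow> \<delta> k = 0"
  unfolding PS_def by auto

lemma Wt_Suc:
  assumes "\<delta> \<in> PS m (Suc k) g"
  shows "Wt i x (Suc m) k (\<delta>(k := h)) = real_of_int ((h - g) * h) * x ^ ((i (Suc k) - i k) * nat h) * Wt i x m (Suc k) \<delta>"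
proof -
  have g: "\<delta> (Suc k) = g" using assms by (simp add: PS_def)
  have "{k..<k + Suc m} = insert k {Suc k..<Suc k + m}" by auto
  then have "Wt i x (Suc m) k (\<delta>(k := h)) = real_of_int ((h - g) * h) * x ^ ((i (Suc k) - i k) * nat h) *
     (\<Prod>j\<in>{Suc k..<Suc k+m}. real_of_int (((\<delta>(k := h)) j - (\<delta>(k := h)) (Suc j)) * (\<delta>(k := h)) j) * x ^ ((i (Suc j) - i j) * nat ((\<delta>(k := h)) j)))"
    unfolding Wt_def using g by simp
  also have "(\<Prod>j\<in>{Suc k..<Suc k+m}. real_of_int (((\<delta>(k := h)) j - (\<delta>(k := h)) (Suc j)) * (\<delta>(k := h)) j) * x ^ ((i (Suc j) - i j) * nat ((\<delta>(k := h)) j)))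
     = Wt i x m (Suc k) \<delta>"
    unfolding Wt_def by (rule prod.cong) auto
  finally show ?thesis .
qed

lemma Gf_PS:
  "h \<ge> 0 \<Longrightarrow> finite (PS m k h) \<and> Gf i x m k (nat h) = (\<Sum>\<delta>\<in>PS m k h. Wt i x m k \<delta>)"
proof (induction m arbitrary: k h)
  case 0
  then show ?case by (auto simp: PS_0 Wt_def)
next
  case (Suc m)
  show ?case
  proof (cases "h = 0")
    case True then show ?thesis by (simp add: PS_Suc_0)
  next
    case False
    then have h1: "h \<ge> 1" using Suc.prems by auto
    have IH1: "finite (PS m (Suc k) (h - 1))" "Gf i x m (Suc k) (nat (h - 1)) = (\<Sum>\<delta>\<in>PS m (Suc k) (h - 1). Wt i x m (Suc k) \<delta>)"
      using Suc.IH[of "h - 1" "Suc k"] h1 by auto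
    have IH2: "finite (PS m (Suc k) (h + 1))" "Gf i x m (Suc k) (nat (h + 1)) = (\<Sum>\<delta>\<in>PS m (Suc k) (h + 1). Wt i x m (Suc k) \<delta>)"
      using Suc.IH[of "h + 1" "Suc k"] h1 by auto
    have inj: "inj_on (\<lambda>\<delta>. \<delta>(k := h)) (PS m (Suc k) (h - 1) \<union> PS m (Suc k) (h + 1))"
    proof (rule inj_onI)
      fix a b assume a: "a \<in> PS m (Suc k) (h - 1) \<union> PS m (Suc k) (h + 1)" and b: "b \<in> PS m (Suc k) (h - 1) \<union> PS m (Suc k) (h + 1)"
        and e: "a(k := h) = b(k := h)"
      have "a k = 0" "b k = 0" using a b PS_zero_at by blast+
      then show "a = b" using e by (metis fun_upd_triv fun_upd_upd)
    qed
    have disj: "PS m (Suc k) (h - 1) \<inter> PS m (Suc k) (h + 1) = {}" by (auto simp: PS_def)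
    have fin: "finite (PS (Suc m) k h)" using PS_Suc[OF h1] IH1 IH2 by simp
    have "(\<Sum>\<delta>\<in>PS (Suc m) k h. Wt i x (Suc m) k \<delta>) =
      (\<Sum>\<delta>\<in>PS m (Suc k) (h - 1) \<union> PS m (Suc k) (h + 1). Wt i x (Suc m) k (\<delta>(k := h)))"
      unfolding PS_Suc[OF h1] by (subst sum.reindex[OF inj]) simp
    also have "\<dots> = (\<Sum>\<delta>\<in>PS m (Suc k) (h - 1). Wt i x (Suc m) k (\<delta>(k := h))) + (\<Sum>\<delta>\<in>PS m (Suc k) (h + 1). Wt i x (Suc m) k (\<delta>(k := h)))"
      by (rule sum.union_disjoint) (use IH1 IH2 disj in auto)
    also have "(\<Sum>\<delta>\<in>PS m (Suc k) (h - 1). Wt i x (Suc m) k (\<delta>(k := h))) =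
        (\<Sum>\<delta>\<in>PS m (Suc k) (h - 1). real_of_int h * x ^ ((i (Suc k) - i k) * nat h) * Wt i x m (Suc k) \<delta>)"
      by (rule sum.cong) (auto simp: Wt_Suc)
    also have "(\<Sum>\<delta>\<in>PS m (Suc k) (h + 1). Wt i x (Suc m) k (\<delta>(k := h))) =
        (\<Sum>\<delta>\<in>PS m (Suc k) (h + 1). - (real_of_int h * x ^ ((i (Suc k) - i k) * nat h)) * Wt i x m (Suc k) \<delta>)"
      by (rule sum.cong) (auto simp: Wt_Suc)
    also have "(\<Sum>\<delta>\<in>PS m (Suc k) (h - 1). real_of_int h * x ^ ((i (Suc k) - i k) * nat h) * Wt i x m (Suc k) \<delta>) + (\<Sum>\<delta>\<in>PS m (Suc k) (h + 1). - (real_of_int h * x ^ ((i (Suc k) - i k) * nat h)) * Wt i x m (Suc k) \<delta>) = real_of_int h * x ^ ((i (Suc k) - i k) * nat h) * (Gf i x m (Suc k) (nat (h - 1)) - Gf i x m (Suc k) (nat (h + 1)))"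
    proof -
      let ?c = "real_of_int h * x ^ ((i (Suc k) - i k) * nat h)"
      have s1: "(\<Sum>\<delta>\<in>PS m (Suc k) (h - 1). ?c * Wt i x m (Suc k) \<delta>) = ?c * Gf i x m (Suc k) (nat (h - 1))"
        by (simp add: sum_distrib_left[symmetric] IH1(2))
      have s2: "(\<Sum>\<delta>\<in>PS m (Suc k) (h + 1). - ?c * Wt i x m (Suc k) \<delta>) = - ?c * Gf i x m (Suc k) (nat (h + 1))"
        by (simp only: sum_distrib_left[symmetric] IH2(2))
      show "(\<Sum>\<delta>\<in>PS m (Suc k) (h - 1). ?c * Wt i x m (Suc k) \<delta>) + (\<Sum>\<delta>\<in>PS m (Suc k) (h + 1). - ?c * Wt i x m (Suc k) \<delta>) =
        ?c * (Gf i x m (Suc k) (nat (h - 1)) - Gf i x m (Suc k) (nat (h + 1)))"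
        unfolding s1 s2 by (simp add: algebra_simps)
    qed
    finally have "(\<Sum>\<delta>\<in>PS (Suc m) k h. Wt i x (Suc m) k \<delta>) =
       real_of_int h * x ^ ((i (Suc k) - i k) * nat h) * (Gf i x m (Suc k) (nat (h - 1)) - Gf i x m (Suc k) (nat (h + 1)))" .
    moreover have e1: "nat (h - 1) = nat h - 1" and e2: "nat (h + 1) = Suc (nat h)" using h1 by auto
    moreover have e3: "real (nat h) = real_of_int h" using h1 by simp
    have "Gf i x (Suc m) k (nat h) = real_of_int h * x ^ ((i (Suc k) - i k) * nat h) * (Gf i x m (Suc k) (nat (h - 1)) - Gf i x m (Suc k) (nat (h + 1)))"
      by (simp only: Gf.simps e1 e2 e3)
    ultimately show ?thesis using fin by (simp only:)
  qed
qed

lemma dyck_PS: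
  assumes r: "1 \<le> r"
  shows "dyck_star r = PS (2 * r - 1) 1 1"
proof -
  have N: "1 + (2 * r - 1) = 2 * r" using r by simp
  show ?thesis
  proof (intro equalityI subsetI)
    fix \<delta> assume "\<delta> \<in> dyck_star r"
    then have a1: "\<forall>k>2*r. \<delta> k = 0" and a2: "\<delta> 0 = 0" and a3: "\<delta> (2*r) = 0"
      and a4: "\<forall>k<2*r. \<bar>\<delta> (Suc k) - \<delta> k\<bar> = 1" and a5: "\<forall>k\<in>{1..2*r-1}. \<delta> k \<ge> 1"
      unfolding dyck_star_def by auto
    have d1: "\<delta> 1 = 1"
    proof -
      have "\<bar>\<delta> 1 - \<delta> 0\<bar> = 1" using a4[rule_format, of 0] r by simp
      moreover have "\<delta> 1 \<ge> 1" using a5 r by auto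
      ultimately show ?thesis using a2 by auto
    qed
    show "\<delta> \<in> PS (2 * r - 1) 1 1"
      unfolding PS_def N
    proof (intro CollectI conjI allI impI)
      fix j assume "j < 1 \<or> 2 * r < j" then show "\<delta> j = 0" using a1 a2 by auto
    next
      show "\<delta> 1 = 1" by (rule d1)
    next
      show "\<delta> (2 * r) = 0" by (rule a3)
    next
      fix j assume "1 \<le> j" "j < 2 * r" then show "\<bar>\<delta> (Suc j) - \<delta> j\<bar> = 1" using a4 by auto
    next
      fix j assume "1 \<le> j" "j < 2 * r" then show "1 \<le> \<delta> j" using a5 by auto
    qed
  next
    fix \<delta> assume "\<delta> \<in> PS (2 * r - 1) 1 1"
    then have a1: "\<forall>j. (j < 1 \<or> 2 * r < j) \<longrightarrow> \<delta> j = 0" and a2: "\<delta> 1 = 1" and a3: "\<delta> (2 * r) = 0"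
      and a4: "\<forall>j. 1 \<le> j \<longrightarrow> j < 2 * r \<longrightarrow> \<bar>\<delta> (Suc j) - \<delta> j\<bar> = 1"
      and a5: "\<forall>j. 1 \<le> j \<longrightarrow> j < 2 * r \<longrightarrow> \<delta> j \<ge> 1"
      unfolding PS_def N by auto
    have d0: "\<delta> 0 = 0" using a1 by auto
    show "\<delta> \<in> dyck_star r"
      unfolding dyck_star_def
    proof (intro CollectI conjI allI impI ballI)
      fix k :: nat assume "k > 2 * r" then show "\<delta> k = 0" using a1 by auto
    next
      show "\<delta> 0 = 0" by (rule d0)
    next
      show "\<delta> (2 * r) = 0" by (rule a3)
    next
      fix k :: nat assume k: "k < 2 * r"
      show "\<bar>\<delta> (Suc k) - \<delta> k\<bar> = 1"
      proof (cases k)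
        case 0 then show ?thesis using d0 a2 by simp
      next
        case (Suc k') then show ?thesis using a4 k by auto
      qed
    next
      fix k assume "k \<in> {1..2 * r - 1}" then show "1 \<le> \<delta> k" using a5 by auto
    qed
  qed
qed

lemma sign_count:
  fixes e :: "nat \<Rightarrow> int"
  assumes "finite J" "\<And>j. j \<in> J \<Longrightarrow> e j = -1 \<or> e j = 1"
  shows "(\<Prod>j\<in>J. e j) = (-1) ^ card {j\<in>J. e j = -1} \<and>
         (\<Sum>j\<in>J. e j) = int (card J) - 2 * int (card {j\<in>J. e j = -1})"
  using assms
proof (induction J rule: finite_induct)
  case empty then show ?case by simp
next
  case (insert a J)
  have IH: "(\<Prod>j\<in>J. e j) = (-1) ^ card {j\<in>J. e j = -1}" "(\<Sum>j\<in>J. e j) = int (card J) - 2 * int (card {j\<in>J. e j = -1})"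
    using insert by auto
  have fin: "finite {j\<in>J. e j = -1}" using insert by auto
  have na: "a \<notin> {j\<in>J. e j = -1}" using insert by auto
  show ?case
  proof (cases "e a = -1")
    case True
    then have "{j\<in>insert a J. e j = -1} = insert a {j\<in>J. e j = -1}" by auto
    then show ?thesis using True IH insert(1,2) card_insert_disjoint[OF fin na] by simp
  next
    case False
    then have ea: "e a = 1" using insert by auto
    have "{j\<in>insert a J. e j = -1} = {j\<in>J. e j = -1}" using False by auto
    then show ?thesis using ea IH insert(1,2) by simp
  qed
qed

lemma dyck_sign:
  assumes r: "1 \<le> r" and d: "\<delta> \<in> dyck_star r"
  shows "(\<Prod>j\<in>{1..<2*r}. \<delta> j - \<delta> (Suc j)) = (-1) ^ (r - 1)"
proof -
  have a4: "\<forall>k<2*r. \<bar>\<delta> (Suc k) - \<delta> k\<bar> = 1" and a3: "\<delta> (2*r) = 0" using d unfolding dyck_star_def by auto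
  have d1: "\<delta> 1 = 1" using d dyck_PS[OF r] by (auto simp: PS_def)
  have pm: "\<And>j. j \<in> {1..<2*r} \<Longrightarrow> \<delta> j - \<delta> (Suc j) = -1 \<or> \<delta> j - \<delta> (Suc j) = 1"
    using a4 by fastforce
  note sc = sign_count[of "{1..<2*r}" "\<lambda>j. \<delta> j - \<delta> (Suc j)", OF _ pm]
  have "(\<Sum>j\<in>{1..<2*r}. \<delta> j - \<delta> (Suc j)) = - (\<Sum>j\<in>{1..<2*r}. \<delta> (Suc j) - \<delta> j)"
    by (simp add: sum_negf[symmetric])
  also have "\<dots> = 1" using sum_Suc_diff'[of 1 "2*r" \<delta>] r a3 d1 by simp
  finally have "int (card {j \<in> {1..<2 * r}. \<delta> j - \<delta> (Suc j) = - 1}) = int r - 1"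
    using sc r by simp
  then have "card {j \<in> {1..<2 * r}. \<delta> j - \<delta> (Suc j) = - 1} = r - 1" using r by linarith
  then show ?thesis using sc by simp
qed

lemma ivt_up:
  fixes \<delta> :: "nat \<Rightarrow> int"
  assumes pq: "p \<le> q" and st: "\<And>j. p \<le> j \<Longrightarrow> j < q \<Longrightarrow> \<bar>\<delta> (Suc j) - \<delta> j\<bar> = 1"
    and l: "\<delta> p \<le> l" "l \<le> \<delta> q"
  shows "\<exists>c. p \<le> c \<and> c \<le> q \<and> \<delta> c = l"
  using pq st l
proof (induction q rule: dec_induct)
  case base then show ?case by auto
next
  case (step q)
  show ?case
  proof (cases "l \<le> \<delta> q")
    case True
    then obtain c where "p \<le> c" "c \<le> q" "\<delta> c = l" using step by auto
    then show ?thesis by (intro exI[of _ c]) auto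
  next
    case False
    have "\<bar>\<delta> (Suc q) - \<delta> q\<bar> = 1" using step by auto
    then have "\<delta> (Suc q) = l" using False step.prems by auto
    then show ?thesis using step by (intro exI[of _ "Suc q"]) auto
  qed
qed

lemma ivt_down:
  fixes \<delta> :: "nat \<Rightarrow> int"
  assumes pq: "p \<le> q" and st: "\<And>j. p \<le> j \<Longrightarrow> j < q \<Longrightarrow> \<bar>\<delta> (Suc j) - \<delta> j\<bar> = 1"
    and l: "l \<le> \<delta> p" "\<delta> q \<le> l"
  shows "\<exists>c. p \<le> c \<and> c \<le> q \<and> \<delta> c = l"
proof -
  have "\<exists>c. p \<le> c \<and> c \<le> q \<and> (\<lambda>j. - \<delta> j) c = - l"
    by (rule ivt_up[OF pq]) (use st l in \<open>auto simp: abs_minus_commute\<close>)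
  then show ?thesis by auto
qed

definition beta :: "(nat \<Rightarrow> int) \<Rightarrow> nat \<Rightarrow> nat" where
  "beta \<delta> a = (LEAST b. a < b \<and> \<delta> b = \<delta> (a - 1))"

definition upset :: "nat \<Rightarrow> (nat \<Rightarrow> int) \<Rightarrow> nat set" where
  "upset r \<delta> = {a. a \<in> {1..2*r} \<and> \<delta> a = \<delta> (a - 1) + 1}"

lemma dyck_facts:
  assumes "\<delta> \<in> dyck_star r"
  shows "\<delta> 0 = 0" "\<delta> (2*r) = 0" "\<And>k. k < 2*r \<Longrightarrow> \<bar>\<delta> (Suc k) - \<delta> k\<bar> = 1"
    "\<And>k. 1 \<le> k \<Longrightarrow> k < 2*r \<Longrightarrow> \<delta> k \<ge> 1" "\<And>k. 2*r < k \<Longrightarrow> \<delta> k = 0"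
  using assms unfolding dyck_star_def by auto

lemma dyck_nonneg:
  assumes "\<delta> \<in> dyck_star r" shows "\<delta> k \<ge> 0"
proof -
  note f = dyck_facts[OF assms]
  show ?thesis
  proof (cases "k = 0 \<or> 2*r \<le> k")
    case True
    then show ?thesis using f(1,2,5) by (metis le_neq_implies_less order_refl)
  next
    case False then show ?thesis using f(4)[of k] by auto
  qed
qed

lemma beta_props:
  assumes d: "\<delta> \<in> dyck_star r" and a: "a \<in> upset r \<delta>"
  shows "a < beta \<delta> a" "beta \<delta> a \<le> 2*r" "\<delta> (beta \<delta> a) = \<delta> (a - 1)"
    "\<And>b. a < b \<Longrightarrow> b < beta \<delta> a \<Longrightarrow> \<delta> b \<noteq> \<delta> (a - 1)"
proof -
  note f = dyck_facts[OF d]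
  have a1: "1 \<le> a" "a \<le> 2*r" "\<delta> a = \<delta> (a - 1) + 1" using a by (auto simp: upset_def)
  have ex: "\<exists>c. a \<le> c \<and> c \<le> 2*r \<and> \<delta> c = \<delta> (a - 1)"
    by (rule ivt_down) (use a1 f dyck_nonneg[OF d, of "a - 1"] in auto)
  then obtain c where c: "a \<le> c" "c \<le> 2*r" "\<delta> c = \<delta> (a - 1)" by blast
  have ca: "a < c" using c a1 by (cases "c = a") auto
  have P: "a < c \<and> \<delta> c = \<delta> (a - 1)" using ca c by auto
  have L: "a < beta \<delta> a \<and> \<delta> (beta \<delta> a) = \<delta> (a - 1)"
    unfolding beta_def by (rule LeastI[of _ c]) (rule P)
  then show "a < beta \<delta> a" "\<delta> (beta \<delta> a) = \<delta> (a - 1)" by simp_all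
  have "beta \<delta> a \<le> c" unfolding beta_def by (rule Least_le) (rule P)
  then show "beta \<delta> a \<le> 2*r" using c by linarith
  show "\<delta> b \<noteq> \<delta> (a - 1)" if "a < b" "b < beta \<delta> a" for b
  proof -
    have "\<not> (a < b \<and> \<delta> b = \<delta> (a - 1))"
      by (rule not_less_Least) (use that in \<open>simp add: beta_def\<close>)
    then show ?thesis using that by simp
  qed
qed

lemma count_cover:
  assumes d: "\<delta> \<in> dyck_star r" and j: "1 \<le> j" "j < 2*r"
  shows "card {a\<in>upset r \<delta>. a \<le> j \<and> j < beta \<delta> a} = nat (\<delta> j)"
proof -
  note f = dyck_facts[OF d]
  let ?C = "{a\<in>upset r \<delta>. a \<le> j \<and> j < beta \<delta> a}"
  have upI: "\<And>a. a \<in> upset r \<delta> \<Longrightarrow> 1 \<le> a \<and> a \<le> 2*r \<and> \<delta> a = \<delta> (a - 1) + 1"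
    by (auto simp: upset_def)
  have bij: "bij_betw (\<lambda>a. nat (\<delta> (a - 1))) ?C {0..<nat (\<delta> j)}"
  proof (rule bij_betwI')
    fix a a' assume a: "a \<in> ?C" and a': "a' \<in> ?C"
    show "(nat (\<delta> (a - 1)) = nat (\<delta> (a' - 1))) = (a = a')"
    proof
      assume e: "nat (\<delta> (a - 1)) = nat (\<delta> (a' - 1))"
      have e': "\<delta> (a - 1) = \<delta> (a' - 1)" using e dyck_nonneg[OF d, of "a - 1"] dyck_nonneg[OF d, of "a' - 1"] by simp
      have key: "x = y" if x: "x \<in> ?C" and y: "y \<in> ?C" and exy: "\<delta> (x - 1) = \<delta> (y - 1)" and lt: "x \<le> y" for x y
      proof (rule ccontr)
        assume "x \<noteq> y"
        then have xy: "x < y" using lt by auto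
        have ux: "1 \<le> x" "\<delta> x = \<delta> (x - 1) + 1" using upI x by auto
        have uy: "1 \<le> y" using upI y by auto
        show False
        proof (cases "y - 1 = x")
          case True then show False using ux exy by simp
        next
          case False
          then have "x < y - 1" using xy uy by auto
          moreover have "y - 1 < beta \<delta> x" using x y xy by auto
          ultimately show False using beta_props(4)[OF d, of x "y - 1"] x exy by auto
        qed
      qed
      show "a = a'"
      proof (cases "a \<le> a'")
        case True show ?thesis by (rule key[OF a a' e' True])
      next
        case False then show ?thesis using key[OF a' a e'[symmetric]] by auto
      qed
    qed simp
  next
    fix a assume a: "a \<in> ?C"
    have ua: "1 \<le> a" "a \<le> 2*r" "\<delta> a = \<delta> (a - 1) + 1" using upI a by auto
    have aj: "a \<le> j" "j < beta \<delta> a" using a by auto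
    have "\<delta> (a - 1) < \<delta> j"
    proof (rule ccontr)
      assume "\<not> \<delta> (a - 1) < \<delta> j"
      then have "\<exists>c. a \<le> c \<and> c \<le> j \<and> \<delta> c = \<delta> (a - 1)"
        by (intro ivt_down) (use aj ua f j in auto)
      then obtain c where c: "a \<le> c" "c \<le> j" "\<delta> c = \<delta> (a - 1)" by blast
      then have "a < c" using ua by (cases "a = c") auto
      then show False using beta_props(4)[OF d, of a c] a c aj by auto
    qed
    then show "nat (\<delta> (a - 1)) \<in> {0..<nat (\<delta> j)}" using dyck_nonneg[OF d, of "a - 1"] by auto
  next
    fix n assume n: "n \<in> {0..<nat (\<delta> j)}"
    define l where "l = int n"
    have l: "0 \<le> l" "l < \<delta> j" using n by (auto simp: l_def)
    define S where "S = {p. p \<le> j \<and> \<delta> p = l}"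
    have "\<exists>c. 0 \<le> c \<and> c \<le> j \<and> \<delta> c = l"
      by (rule ivt_up) (use f l j in auto)
    then have Sne: "S \<noteq> {}" by (auto simp: S_def)
    have Sfin: "finite S" by (auto simp: S_def)
    define p where "p = Max S"
    have pS: "p \<in> S" using Max_in[OF Sfin Sne] by (simp add: p_def)
    have pmax: "\<And>c. c \<in> S \<Longrightarrow> c \<le> p" using Max_ge[OF Sfin] by (simp add: p_def)
    have pj: "p < j" using pS l by (cases "p = j") (auto simp: S_def)
    have st: "\<bar>\<delta> (Suc p) - \<delta> p\<bar> = 1" using f(3)[of p] pj j by auto
    have up: "\<delta> (Suc p) = l + 1"
    proof (rule ccontr)
      assume "\<delta> (Suc p) \<noteq> l + 1"
      then have "\<delta> (Suc p) = l - 1" using st pS by (auto simp: S_def)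
      then have "\<exists>c. Suc p \<le> c \<and> c \<le> j \<and> \<delta> c = l"
        by (intro ivt_up) (use pj f l j in auto)
      then obtain c where "Suc p \<le> c" "c \<le> j" "\<delta> c = l" by blast
      then show False using pmax[of c] by (auto simp: S_def)
    qed
    have aU: "Suc p \<in> upset r \<delta>" using up pS pj j by (auto simp: upset_def S_def)
    have jb: "j < beta \<delta> (Suc p)"
    proof (rule ccontr)
      assume "\<not> j < beta \<delta> (Suc p)"
      moreover have "\<delta> (beta \<delta> (Suc p)) = l" "Suc p < beta \<delta> (Suc p)"
        using beta_props(1,3)[OF d aU] pS by (auto simp: S_def)
      ultimately show False using pmax[of "beta \<delta> (Suc p)"] by (auto simp: S_def)
    qed
    have "Suc p \<in> ?C" using aU jb pj by auto
    moreover have "n = nat (\<delta> (Suc p - 1))" using pS by (simp add: S_def l_def)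
    ultimately show "\<exists>a\<in>?C. n = nat (\<delta> (a - 1))" by blast
  qed
  then show ?thesis by (simp add: bij_betw_same_card)
qed

lemma tel_nat:
  fixes i :: "nat \<Rightarrow> nat"
  assumes "a \<le> b" "\<And>j. a \<le> j \<Longrightarrow> j < b \<Longrightarrow> i j \<le> i (Suc j)"
  shows "i b - i a = (\<Sum>j\<in>{a..<b}. i (Suc j) - i j) \<and> i a \<le> i b"
  using assms
proof (induction b rule: dec_induct)
  case base then show ?case by simp
next
  case (step b)
  have IH: "i b - i a = (\<Sum>j\<in>{a..<b}. i (Suc j) - i j)" "i a \<le> i b" using step by auto
  have "i b \<le> i (Suc b)" using step by auto
  then show ?case using IH step(1) by (simp add: sum.atLeastLessThan_Suc)
qed

lemma pairing_image: "dyck_pairing r \<delta> = (\<lambda>a. (a, beta \<delta> a)) ` upset r \<delta>"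
  unfolding dyck_pairing_def upset_def beta_def by auto

lemma pair_exponent:
  fixes i :: "nat \<Rightarrow> nat"
  assumes r: "1 \<le> r" and d: "\<delta> \<in> dyck_star r"
    and mono: "\<And>j. 1 \<le> j \<Longrightarrow> j < 2*r \<Longrightarrow> i j \<le> i (Suc j)"
  shows "(\<Sum>(a, b)\<in>dyck_pairing r \<delta>. i b - i a) = (\<Sum>j\<in>{1..<2*r}. (i (Suc j) - i j) * nat (\<delta> j))"
proof -
  let ?U = "upset r \<delta>"
  let ?d = "\<lambda>j. i (Suc j) - i j"
  have finU: "finite ?U" by (auto simp: upset_def)
  have inj: "inj_on (\<lambda>a. (a, beta \<delta> a)) ?U" by (auto intro: inj_onI)
  have "(\<Sum>(a, b)\<in>dyck_pairing r \<delta>. i b - i a) = (\<Sum>a\<in>?U. i (beta \<delta> a) - i a)"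
    unfolding pairing_image by (subst sum.reindex[OF inj]) simp
  also have "\<dots> = (\<Sum>a\<in>?U. \<Sum>j\<in>{1..<2*r}. if a \<le> j \<and> j < beta \<delta> a then ?d j else 0)"
  proof (rule sum.cong)
    fix a assume a: "a \<in> ?U"
    have a1: "1 \<le> a" using a by (auto simp: upset_def)
    have b: "a < beta \<delta> a" "beta \<delta> a \<le> 2*r" using beta_props(1,2)[OF d a] by auto
    have "i (beta \<delta> a) - i a = (\<Sum>j\<in>{a..<beta \<delta> a}. ?d j)"
      using tel_nat[of a "beta \<delta> a" i] b a1 mono by auto
    also have "{a..<beta \<delta> a} = {j\<in>{1..<2*r}. a \<le> j \<and> j < beta \<delta> a}" using a1 b by auto
    also have "(\<Sum>j\<in>{j\<in>{1..<2*r}. a \<le> j \<and> j < beta \<delta> a}. ?d j) = (\<Sum>j\<in>{1..<2*r}. if a \<le> j \<and> j < beta \<delta> a then ?d j else 0)"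
      by (rule sum.inter_filter) simp
    finally show "i (beta \<delta> a) - i a = (\<Sum>j\<in>{1..<2*r}. if a \<le> j \<and> j < beta \<delta> a then ?d j else 0)" .
  qed simp
  also have "\<dots> = (\<Sum>j\<in>{1..<2*r}. \<Sum>a\<in>?U. if a \<le> j \<and> j < beta \<delta> a then ?d j else 0)"
    by (rule sum.swap)
  also have "\<dots> = (\<Sum>j\<in>{1..<2*r}. ?d j * nat (\<delta> j))"
  proof (rule sum.cong)
    fix j assume j: "j \<in> {1..<2*r}"
    have "(\<Sum>a\<in>?U. if a \<le> j \<and> j < beta \<delta> a then ?d j else 0) = (\<Sum>a\<in>{a\<in>?U. a \<le> j \<and> j < beta \<delta> a}. ?d j)"
      by (rule sum.inter_filter[symmetric]) (rule finU)
    also have "\<dots> = card {a\<in>?U. a \<le> j \<and> j < beta \<delta> a} * ?d j" by simp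
    also have "card {a\<in>?U. a \<le> j \<and> j < beta \<delta> a} = nat (\<delta> j)" using count_cover[OF d] j by auto
    finally show "(\<Sum>a\<in>?U. if a \<le> j \<and> j < beta \<delta> a then ?d j else 0) = ?d j * nat (\<delta> j)" by simp
  qed simp
  finally show ?thesis .
qed

theorem theorem5p1:
  fixes \<beta> x :: real and n r :: nat and i :: "nat \<Rightarrow> nat"
  assumes "\<beta> > 0" and "x = tanh \<beta>" and "r \<ge> 1"
    and "1 \<le> i 1" and "\<And>k. 1 \<le> k \<Longrightarrow> k < 2*r \<Longrightarrow> i k \<le> i (Suc k)" and "i (2*r) \<le> n"
  shows "cumulant (ising_E n \<beta>) (2*r) (\<lambda>j \<sigma>. real_of_int (\<sigma> (i j))) =
    (-1) ^ (r - 1) * (\<Sum>\<delta>\<in>dyck_star r.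
        real_of_int (\<Prod>k = 1..2*r-1. \<delta> k) *
        x ^ (\<Sum>(a, b)\<in>dyck_pairing r \<delta>. i b - i a))"
proof -
  note bpos = assms(1) and xdef = assms(2) and r = assms(3) and i1 = assms(4) and mono = assms(5) and iN = assms(6)
  define s where "s = 2 * r"
  have s1: "1 \<le> s" using r by (simp add: s_def)
  have monS: "\<And>j. 1 \<le> j \<Longrightarrow> j < s \<Longrightarrow> i j \<le> i (Suc j)" using mono by (simp add: s_def)
  have n1: "1 \<le> n" using i1 iN mono_le[where i=i and s=s and j=1 and k=s, OF monS] s1 by (simp add: s_def)
  have summand: "(-1) ^ (card P - 1) * fact (card P - 1) *
        (\<Prod>A\<in>P. ising_E n \<beta> (\<lambda>\<omega>. \<Prod>j\<in>A. real_of_int (\<omega> (i j))))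
      = x ^ (ew i s P) * Phi i x s s (hP P) (qP P)"
    if P: "partition_on {1..s} P" for P
  proof -
    have fP: "finite P" using finite_elements[OF _ P] by simp
    have blk: "\<And>A. A \<in> P \<Longrightarrow> A \<subseteq> {1..s} \<and> finite A"
      using P unfolding part_def' by (auto intro: finite_subset)
    have irange: "\<And>A j. A \<in> P \<Longrightarrow> j \<in> A \<Longrightarrow> i j \<in> {1..n} \<and> i j \<le> i s"
    proof -
      fix A j assume AP: "A \<in> P" and jA: "j \<in> A"
      have "A \<subseteq> {1..s}" using blk[OF AP] by simp
      then have j: "1 \<le> j" "j \<le> s" using jA by auto
      have "i 1 \<le> i j" "i j \<le> i s"
        using mono_le[where i=i and s=s, OF monS] j s1 by auto
      then show "i j \<in> {1..n} \<and> i j \<le> i s" using i1 iN by (auto simp: s_def)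
    qed
    have mom: "ising_E n \<beta> (\<lambda>\<omega>. \<Prod>j\<in>A. real_of_int (\<omega> (i j))) =
        (if even (card A) then x ^ Eblk i s A else 0)" if A: "A \<in> P" for A
    proof -
      have "ising_E n \<beta> (\<lambda>\<omega>. \<Prod>j\<in>A. real_of_int (\<omega> (i j))) =
        (if even (card A) then tanh \<beta> ^ card {u\<in>{1..<n}. odd (card {j\<in>A. i j \<le> u})} else 0)"
        by (rule ising_moment[OF n1]) (use blk[OF A] irange[OF A] in auto)
      moreover have "even (card A) \<Longrightarrow> {u\<in>{1..<n}. odd (card {j\<in>A. i j \<le> u})} = {t\<in>{1..<i s}. odd (card {j\<in>A. i j \<le> t})}"
      proof -
        assume ev: "even (card A)"
        have eqA: "\<And>u. i s \<le> u \<Longrightarrow> {j\<in>A. i j \<le> u} = A" using irange[OF A] by force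
        have isn: "i s \<le> n" using iN by (simp add: s_def)
        show ?thesis
        proof (intro equalityI subsetI)
          fix u assume "u \<in> {u\<in>{1..<n}. odd (card {j\<in>A. i j \<le> u})}"
          then have u: "1 \<le> u" "u < n" "odd (card {j\<in>A. i j \<le> u})" by auto
          have "u < i s"
          proof (rule ccontr)
            assume "\<not> u < i s"
            then have "{j\<in>A. i j \<le> u} = A" using eqA by auto
            then show False using u ev by simp
          qed
          then show "u \<in> {t\<in>{1..<i s}. odd (card {j\<in>A. i j \<le> t})}" using u by auto
        next
          fix u assume "u \<in> {t\<in>{1..<i s}. odd (card {j\<in>A. i j \<le> t})}"
          then show "u \<in> {u\<in>{1..<n}. odd (card {j\<in>A. i j \<le> u})}" using isn by auto
        qed
      qed
      ultimately show ?thesis by (simp add: xdef Eblk_def)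
    qed
    have "(\<Prod>A\<in>P. ising_E n \<beta> (\<lambda>\<omega>. \<Prod>j\<in>A. real_of_int (\<omega> (i j)))) =
       (\<Prod>A\<in>P. if even (card A) then x ^ Eblk i s A else 0)"
      by (rule prod.cong) (simp_all add: mom)
    also have "\<dots> = (if hP P = 0 then x ^ ew i s P else 0)"
    proof (cases "hP P = 0")
      case True
      then have "{A\<in>P. odd (card A)} = {}" using fP by (simp add: hP_def)
      then have "\<And>A. A \<in> P \<Longrightarrow> even (card A)" by auto
      then have "(\<Prod>A\<in>P. if even (card A) then x ^ Eblk i s A else 0) = (\<Prod>A\<in>P. x ^ Eblk i s A)"
        by (intro prod.cong) auto
      also have "\<dots> = x ^ ew i s P" by (simp add: ew_def power_sum)
      finally show ?thesis using True by simp
    next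
      case False
      then obtain A where A: "A \<in> P" "odd (card A)" unfolding hP_def
        by (metis (mono_tags, lifting) card.empty empty_Collect_eq)
      have "(\<Prod>A\<in>P. if even (card A) then x ^ Eblk i s A else 0) = 0"
        using fP A by (intro prod_zero) auto
      then show ?thesis using False by simp
    qed
    finally have pr: "(\<Prod>A\<in>P. ising_E n \<beta> (\<lambda>\<omega>. \<Prod>j\<in>A. real_of_int (\<omega> (i j)))) = (if hP P = 0 then x ^ ew i s P else 0)" .
    have hq: "hP P + qP P = card P" using card_filter_compl[OF fP, of "\<lambda>A. odd (card A)"]
      by (simp add: hP_def qP_def)
    show ?thesis unfolding pr Phi_def hq by simp
  qed
  have "cumulant (ising_E n \<beta>) (2*r) (\<lambda>j \<sigma>. real_of_int (\<sigma> (i j))) =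
      (\<Sum>P\<in>{P. partition_on {1..s} P}. x ^ (ew i s P) * Phi i x s s (hP P) (qP P))"
    unfolding cumulant_def s_def[symmetric]
    by (rule sum.cong[OF refl], rule summand, simp)
  also have "\<dots> = Gf i x (s - 1) 1 1"
    by (rule invariant[OF monS i1 s1]) simp_all
  also have "\<dots> = (\<Sum>\<delta>\<in>PS (s - 1) 1 1. Wt i x (s - 1) 1 \<delta>)"
    using Gf_PS[of 1 "s - 1" 1 i x] by simp
  also have "PS (s - 1) 1 1 = dyck_star r" using dyck_PS[OF r] by (simp add: s_def)
  also have "(\<Sum>\<delta>\<in>dyck_star r. Wt i x (s - 1) 1 \<delta>) = (\<Sum>\<delta>\<in>dyck_star r. (-1) ^ (r - 1) *
        (real_of_int (\<Prod>k = 1..2*r-1. \<delta> k) * x ^ (\<Sum>(a, b)\<in>dyck_pairing r \<delta>. i b - i a)))"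
  proof (rule sum.cong)
    fix \<delta> assume d: "\<delta> \<in> dyck_star r"
    have iv: "{1..<1 + (s - 1)} = {1..<2*r}" using r by (auto simp: s_def)
    have iv2: "{1..2*r-1} = {1..<2*r}" using r by auto
    have "Wt i x (s - 1) 1 \<delta> = (\<Prod>j\<in>{1..<2*r}. real_of_int (\<delta> j - \<delta> (Suc j)) * real_of_int (\<delta> j) * x ^ ((i (Suc j) - i j) * nat (\<delta> j)))"
      unfolding Wt_def iv by simp
    also have "\<dots> = real_of_int (\<Prod>j\<in>{1..<2*r}. \<delta> j - \<delta> (Suc j)) * real_of_int (\<Prod>j\<in>{1..<2*r}. \<delta> j) *
        x ^ (\<Sum>j\<in>{1..<2*r}. (i (Suc j) - i j) * nat (\<delta> j))"
      by (simp add: prod.distrib power_sum)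
    also have "(\<Prod>j\<in>{1..<2*r}. \<delta> j - \<delta> (Suc j)) = (-1) ^ (r - 1)" by (rule dyck_sign[OF r d])
    also have "(\<Sum>j\<in>{1..<2*r}. (i (Suc j) - i j) * nat (\<delta> j)) = (\<Sum>(a, b)\<in>dyck_pairing r \<delta>. i b - i a)"
      by (rule pair_exponent[where i=i, OF r d mono, symmetric])
    finally show "Wt i x (s - 1) 1 \<delta> = (-1) ^ (r - 1) *
        (real_of_int (\<Prod>k = 1..2*r-1. \<delta> k) * x ^ (\<Sum>(a, b)\<in>dyck_pairing r \<delta>. i b - i a))"
      unfolding iv2 by simp
  qed simp
  also have "\<dots> = (-1) ^ (r - 1) * (\<Sum>\<delta>\<in>dyck_star r.
        real_of_int (\<Prod>k = 1..2*r-1. \<delta> k) * x ^ (\<Sum>(a, b)\<in>dyck_pairing r \<delta>. i b - i a))"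
    by (simp add: sum_distrib_left)
  finally show ?thesis .
qed

end
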